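(* Fix $\eta>0$ and assume $d\ge2$. There exists a minimizer $\lambda^*$ of $L$ such that $$4L(0)-4L(\lambda^* )+16m^2\eta\|\lambda^*\|_2^2\le G(\eta)^2,\qquad G(\eta):=24md(m+n)\Big(\sqrt\eta\,\|C\|_\infty+\frac{\log d}{\sqrt\eta}\Big).$$
   Context: Let $G=(V,E)$ be a finite undirected graph with $n=|V|$, $m=|E|$, every vertex incident to at least one edge; $N_i=\{e\in E:i\in e\}$. $\chi$ is a finite label set with $d=|\chi|\ge2$. Costs $C_i\in\mathbb{R}^\chi$, $C_e\in\mathbb{R}^{\chi^2}$; $\|C\|_\infty$ is the largest absolute entry; for $e=\{i,j\}$, $x_e=(x_i,x_j)$, $(x_e)_i=x_i$. Dual variables $\lambda=(\lambda_{e,i}(x))_{e\in E,i\in e,x\in\chi}\in\mathbb{R}^{2md}$ and $$L(\lambda)=\frac1\eta\sum_{i\in V}\log\sum_{x\in\chi}\exp\Big(-\eta C_i(x)+\eta\sum_{e\in N_i}\lambda_{e,i}(x)\Big)+\frac1\eta\sum_{e\in E}\log\sum_{x_e\in\chi^2}\exp\Big(-\eta C_e(x_e)-\eta\sum_{i\in e}\lambda_{e,i}((x_e)_i)\Big).$$ *)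

theory Defs
  imports "HOL-Analysis.Analysis"
begin

text \<open>Graph: vertex set V, edge set E of two-element subsets of V. An edge labelling x_e in chi^2 is represented as a map
  from the two endpoints of e to X (an element of PiE e (\<lambda>_. X)), so (x_e)_i = x_e i.\<close>

definition nbhd :: "'v set set \<Rightarrow> 'v \<Rightarrow> 'v set set" where
  "nbhd E i = {e \<in> E. i \<in> e}"

definition dualL ::
  "real \<Rightarrow> 'v set \<Rightarrow> 'v set set \<Rightarrow> 'x set \<Rightarrow> ('v \<Rightarrow> 'x \<Rightarrow> real)
   \<Rightarrow> ('v set \<Rightarrow> ('v \<Rightarrow> 'x) \<Rightarrow> real) \<Rightarrow> ('v set \<Rightarrow> 'v \<Rightarrow> 'x \<Rightarrow> real) \<Rightarrow> real" where
  "dualL \<eta> V E X Cv Ce lam =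
     (1 / \<eta>) * (\<Sum>i\<in>V. ln (\<Sum>x\<in>X. exp (- \<eta> * Cv i x + \<eta> * (\<Sum>e\<in>nbhd E i. lam e i x))))
   + (1 / \<eta>) * (\<Sum>e\<in>E. ln (\<Sum>xe\<in>PiE e (\<lambda>_. X).
         exp (- \<eta> * Ce e xe - \<eta> * (\<Sum>i\<in>e. lam e i (xe i)))))"

text \<open>Largest absolute entry of the costs (0 is included only to make Max well-defined
  when there are no entries; all entries are nonnegative in absolute value).\<close>
definition cost_sup ::
  "'v set \<Rightarrow> 'v set set \<Rightarrow> 'x set \<Rightarrow> ('v \<Rightarrow> 'x \<Rightarrow> real)
   \<Rightarrow> ('v set \<Rightarrow> ('v \<Rightarrow> 'x) \<Rightarrow> real) \<Rightarrow> real" where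
  "cost_sup V E X Cv Ce =
     Max (insert 0 ({\<bar>Cv i x\<bar> | i x. i \<in> V \<and> x \<in> X}
                 \<union> {\<bar>Ce e xe\<bar> | e xe. e \<in> E \<and> xe \<in> PiE e (\<lambda>_. X)}))"

definition dual_norm2_sq :: "'v set set \<Rightarrow> 'x set \<Rightarrow> ('v set \<Rightarrow> 'v \<Rightarrow> 'x \<Rightarrow> real) \<Rightarrow> real" where
  "dual_norm2_sq E X lam = (\<Sum>e\<in>E. \<Sum>i\<in>e. \<Sum>x\<in>X. (lam e i x)\<^sup>2)"

end

theory Submission
  imports Defs
begin


lemma foc_real:
  fixes a A W B :: real
  assumes a: "0 < a" "a \<le> A" and w: "0 < W" "W \<le> B"
    and H: "\<And>s. s > 0 \<Longrightarrow> (A + (s - 1) * a) * (B + (1/s - 1) * W) \<ge> A * B"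
  shows "a * B = W * A"
proof -
  define \<alpha> where "\<alpha> = a * (B - W)"
  define \<beta> where "\<beta> = W * (A - a)"
  have ab: "\<alpha> \<ge> 0" "\<beta> \<ge> 0" unfolding \<alpha>_def \<beta>_def using a w by auto
  have id: "s * ((A + (s - 1) * a) * (B + (1/s - 1) * W) - A * B) = (s - 1) * (\<alpha> * s - \<beta>)" if "s > 0" for s
    using that unfolding \<alpha>_def \<beta>_def by (simp add: field_simps)
  have nn: "(s - 1) * (\<alpha> * s - \<beta>) \<ge> 0" if "s > 0" for s
    using H[OF that] id[OF that] that by (metis diff_ge_0_iff_ge zero_le_mult_iff less_le_not_le)
  have "\<alpha> = \<beta>"
  proof (rule ccontr)
    assume ne: "\<alpha> \<noteq> \<beta>"
    show False
    proof (cases "\<alpha> > \<beta>")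
      case True
      define s where "s = (\<alpha> + \<beta>) / (2 * \<alpha>)"
      have s0: "s > 0" using True ab unfolding s_def by auto
      have "s < 1" using True ab unfolding s_def by (simp add: field_simps)
      moreover have "\<alpha> * s - \<beta> > 0" using True ab unfolding s_def by (simp add: field_simps)
      ultimately have "(s - 1) * (\<alpha> * s - \<beta>) < 0" by (simp add: mult_neg_pos)
      thus False using nn[OF s0] by simp
    next
      case False
      hence lt: "\<alpha> < \<beta>" using ne by simp
      define s where "s = 2 * \<beta> / (\<alpha> + \<beta>)"
      have s0: "s > 0" using lt ab unfolding s_def by auto
      have "s > 1" using lt ab unfolding s_def by (simp add: field_simps)
      moreover have "\<alpha> * s - \<beta> < 0" using lt ab unfolding s_def by (simp add: field_simps)
      ultimately have "(s - 1) * (\<alpha> * s - \<beta>) < 0" by (simp add: mult_pos_neg)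
      thus False using nn[OF s0] by simp
    qed
  qed
  thus ?thesis unfolding \<alpha>_def \<beta>_def by (simp add: algebra_simps)
qed

lemma sum_exp_bump: assumes "finite A"
  shows "(\<Sum>x\<in>A. exp (f x + (if P x then k else 0))) = (\<Sum>x\<in>A. exp (f x)) + (exp k - 1) * (\<Sum>x\<in>{x\<in>A. P x}. exp (f x::real))"
proof -
  have "(\<Sum>x\<in>A. exp (f x + (if P x then k else 0))) = (\<Sum>x\<in>A. exp (f x) + (if P x then (exp k - 1) * exp (f x) else 0))"
    by (rule sum.cong) (auto simp: exp_add algebra_simps)
  also have "\<dots> = (\<Sum>x\<in>A. exp (f x)) + (\<Sum>x\<in>{x\<in>A. P x}. (exp k - 1) * exp (f x))"
    by (simp add: sum.distrib sum.inter_filter[OF assms])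
  finally show ?thesis by (simp add: sum_distrib_left)
qed

lemma osc_alg:
  fixes v u :: "'a \<Rightarrow> real"
  assumes K: "finite K" "e \<in> K" and eta: "\<eta> > 0"
    and eq: "\<And>f. f \<in> K \<Longrightarrow> - a + \<eta> * (\<Sum>g\<in>K. v g) + \<eta> * v f = u f"
    and ub: "\<And>f. f \<in> K \<Longrightarrow> \<bar>u f\<bar> \<le> c" and ab: "\<bar>a\<bar> \<le> c"
  shows "\<eta> * v e \<le> 2 * c"
proof -
  define k where "k = real (card K)"
  define Sv where "Sv = (\<Sum>g\<in>K. v g)"
  have "(\<Sum>f\<in>K. - a + \<eta> * Sv + \<eta> * v f) = (\<Sum>f\<in>K. u f)"
    using eq unfolding Sv_def by (intro sum.cong) auto
  hence sum_eq: "k * (- a + \<eta> * Sv) + \<eta> * Sv = (\<Sum>f\<in>K. u f)"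
    unfolding k_def by (simp add: sum.distrib sum_distrib_left[symmetric] Sv_def)
  have T: "\<bar>\<Sum>f\<in>K. u f\<bar> \<le> k * c"
  proof -
    have "\<bar>\<Sum>f\<in>K. u f\<bar> \<le> (\<Sum>f\<in>K. \<bar>u f\<bar>)" by (rule sum_abs)
    also have "\<dots> \<le> (\<Sum>f\<in>K. c)" using ub by (intro sum_mono) auto
    finally show ?thesis unfolding k_def by simp
  qed
  have ee: "\<eta> * v e = u e + a - \<eta> * Sv" using eq[OF K(2)] unfolding Sv_def by simp
  have s2: "(k + 1) * (\<eta> * Sv) = (\<Sum>f\<in>K. u f) + k * a" using sum_eq by (simp add: algebra_simps)
  have "(k + 1) * (\<eta> * v e) = (k + 1) * u e + (k + 1) * a - (k + 1) * (\<eta> * Sv)"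
    unfolding ee by (simp add: algebra_simps)
  also have "\<dots> = (k + 1) * u e + a - (\<Sum>f\<in>K. u f)" unfolding s2 by (simp add: algebra_simps)
  finally have "(k + 1) * (\<eta> * v e) = (k + 1) * u e + a - (\<Sum>f\<in>K. u f)" .
  also have "\<dots> \<le> (k + 1) * c + c + k * c"
  proof -
    have "(k + 1) * u e \<le> (k + 1) * c" using ub[OF K(2)] unfolding k_def
      by (intro mult_left_mono) auto
    thus ?thesis using T ab by (simp add: abs_le_iff)
  qed
  also have "\<dots> = (k + 1) * (2 * c)" by (simp add: algebra_simps)
  finally show ?thesis unfolding k_def
    by (smt (verit) mult_le_cancel_left_pos of_nat_0_le_iff)
qed

lemma final_arith:
  fixes n m d C \<eta> ld P Q :: real
  assumes m: "m \<ge> 1" and d: "d \<ge> 2" and n: "n \<ge> 0" and C: "C \<ge> 0" and eta: "\<eta> > 0"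
    and ld: "ld \<ge> 1/2"
    and P: "P \<le> 2 * (n + m) * C + (n + 2 * m) * ld / \<eta>"
    and Q: "Q \<le> 32 * m * d * C^2"
  shows "4 * P + 16 * m^2 * \<eta> * Q \<le> (24 * m * d * (m + n) * (sqrt \<eta> * C + ld / sqrt \<eta>))^2"
proof -
  define N where "N = m + n"
  define Z where "Z = m^2 * d^2 * N^2"
  have N1: "N \<ge> 1" "N \<ge> m" unfolding N_def using m n by auto
  have s: "sqrt \<eta> > 0" "sqrt \<eta> ^ 2 = \<eta>" using eta by auto
  have sq: "(sqrt \<eta> * C + ld / sqrt \<eta>)^2 = \<eta> * C^2 + 2 * C * ld + ld^2 / \<eta>"
    using s by (simp add: power2_eq_square field_simps)
  have R: "(24 * m * d * (m + n) * (sqrt \<eta> * C + ld / sqrt \<eta>))^2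
      = 576 * Z * (\<eta> * C^2) + 1152 * Z * (C * ld) + 576 * Z * (ld^2 / \<eta>)"
  proof -
    have "(24 * m * d * (m + n) * (sqrt \<eta> * C + ld / sqrt \<eta>))^2 = (24 * m * d * N)^2 * (sqrt \<eta> * C + ld / sqrt \<eta>)^2"
      unfolding N_def by (simp only: power_mult_distrib)
    also have "\<dots> = (24 * m * d * N)^2 * (\<eta> * C^2 + 2 * C * ld + ld^2 / \<eta>)" unfolding sq ..
    also have "(24 * m * d * N)^2 = 576 * Z" unfolding Z_def by (simp add: power_mult_distrib)
    finally show ?thesis by (simp only: distrib_left mult.assoc)
  qed
  have mdN: "Z \<ge> 4 * N^2"
  proof -
    have "m^2 \<ge> 1" using m by simp
    moreover have "d^2 \<ge> 2^2" using d by (intro power_mono) auto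
    ultimately have "m^2 * d^2 \<ge> 1 * 4" by (intro mult_mono) auto
    thus ?thesis unfolding Z_def by (intro mult_right_mono) auto
  qed
  have N2: "N^2 \<ge> N" using N1 by (simp add: power2_eq_square)
  have Z0: "Z \<ge> 0" using mdN by (smt (verit) zero_le_power2)
  have t1: "16 * m^2 * \<eta> * Q \<le> 576 * Z * (\<eta> * C^2)"
  proof -
    have "16 * m^2 * \<eta> * Q \<le> 16 * m^2 * \<eta> * (32 * m * d * C^2)"
      using Q eta m by (intro mult_left_mono) auto
    also have "\<dots> = 512 * (m^2 * (m * d)) * (\<eta> * C^2)" by (simp add: power2_eq_square algebra_simps)
    also have "\<dots> \<le> 576 * (m^2 * (d^2 * N^2)) * (\<eta> * C^2)"
    proof -
      have "m * d \<le> N^2 * d^2"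
      proof -
        have "m \<le> N^2" using N1 N2 by linarith
        moreover have "d \<le> d^2" using d by (simp add: power2_eq_square)
        ultimately show ?thesis using m d by (intro mult_mono) auto
      qed
      hence "m^2 * (m * d) \<le> m^2 * (N^2 * d^2)" by (intro mult_left_mono) auto
      hence "m^2 * (m * d) \<le> m^2 * (d^2 * N^2)" by (simp only: mult.commute[of "N^2"])
      moreover have "0 \<le> m^2 * (m * d)" using m d by simp
      ultimately have "512 * (m^2 * (m * d)) \<le> 576 * (m^2 * (d^2 * N^2))" by linarith
      thus ?thesis using eta C by (intro mult_right_mono) auto
    qed
    finally show ?thesis unfolding Z_def by (simp add: mult.assoc)
  qed
  have t2: "8 * N * C \<le> 1152 * Z * (C * ld)"
  proof -
    have "1152 * Z * ld \<ge> 1152 * (4 * N^2) * (1/2)"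
      using mdN ld N1 Z0 by (intro mult_mono) auto
    hence "1152 * Z * ld \<ge> 8 * N" using N2 N1 by linarith
    hence "8 * N * C \<le> (1152 * Z * ld) * C" using C by (intro mult_right_mono) auto
    thus ?thesis by (simp add: mult.assoc mult.commute mult.left_commute)
  qed
  have t3: "4 * (n + 2 * m) * ld / \<eta> \<le> 576 * Z * (ld^2 / \<eta>)"
  proof -
    have l2: "ld^2 \<ge> ld / 2"
    proof -
      have "ld * (1/2) \<le> ld * ld" using ld by (intro mult_left_mono) auto
      thus ?thesis by (simp add: power2_eq_square)
    qed
    have "576 * Z * ld^2 \<ge> 576 * (4 * N^2) * (ld / 2)"
      using mdN l2 ld N1 Z0 by (intro mult_mono) auto
    moreover have "576 * (4 * N^2) * (ld / 2) \<ge> 4 * (n + 2 * m) * ld"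
    proof -
      have "n + 2 * m \<le> 2 * N" unfolding N_def using n by simp
      hence a1: "4 * (n + 2 * m) \<le> 8 * N" by (simp add: algebra_simps)
      have a2: "8 * N \<le> 1152 * N^2" using N2 N1 by linarith
      from a1 a2 have "4 * (n + 2 * m) \<le> 1152 * N^2" by linarith
      hence "4 * (n + 2 * m) * ld \<le> 1152 * N^2 * ld" using ld by (intro mult_right_mono) auto
      thus ?thesis by (simp add: algebra_simps)
    qed
    ultimately have "4 * (n + 2 * m) * ld \<le> 576 * Z * ld^2" by linarith
    hence "4 * (n + 2 * m) * ld / \<eta> \<le> 576 * Z * ld^2 / \<eta>" using eta by (simp add: divide_right_mono)
    thus ?thesis by simp
  qed
  have "4 * P \<le> 4 * (2 * (n + m) * C + (n + 2 * m) * ld / \<eta>)" using P by simp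
  also have "\<dots> = 8 * N * C + 4 * (n + 2 * m) * ld / \<eta>" unfolding N_def by (simp add: algebra_simps add_divide_distrib)
  finally have "4 * P \<le> 8 * N * C + 4 * (n + 2 * m) * ld / \<eta>" .
  thus ?thesis unfolding R using t1 t2 t3 by linarith
qed

lemma ln2_half: "ln (2::real) \<ge> 1/2"
proof -
  have "exp (1/2::real) ^ 2 = exp 1" by (simp add: exp_of_nat_mult[symmetric] power2_eq_square exp_add[symmetric])
  hence "exp (1/2::real) ^ 2 \<le> 2 ^ 2" using exp_le by simp
  hence "exp (1/2::real) \<le> 2" by (rule power2_le_imp_le) simp
  thus ?thesis by (subst ln_ge_iff) auto
qed

locale dsetup =
  fixes V :: "'v set" and E :: "'v set set" and X :: "'x set"
    and Cv :: "'v \<Rightarrow> 'x \<Rightarrow> real" and Ce :: "'v set \<Rightarrow> ('v \<Rightarrow> 'x) \<Rightarrow> real"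
    and \<eta> :: real
  assumes finV: "finite V"
    and edges: "\<forall>e\<in>E. \<exists>i j. i \<in> V \<and> j \<in> V \<and> i \<noteq> j \<and> e = {i, j}"
    and cover: "\<forall>i\<in>V. \<exists>e\<in>E. i \<in> e"
    and finX: "finite X"
    and d2: "card X \<ge> 2"
    and eta: "\<eta> > 0"
begin

abbreviation "L \<equiv> dualL \<eta> V E X Cv Ce"
abbreviation "C \<equiv> cost_sup V E X Cv Ce"

definition vt :: "('v set \<Rightarrow> 'v \<Rightarrow> 'x \<Rightarrow> real) \<Rightarrow> 'v \<Rightarrow> 'x \<Rightarrow> real" where
  "vt lam i x = - \<eta> * Cv i x + \<eta> * (\<Sum>e\<in>nbhd E i. lam e i x)"
definition et :: "('v set \<Rightarrow> 'v \<Rightarrow> 'x \<Rightarrow> real) \<Rightarrow> 'v set \<Rightarrow> ('v \<Rightarrow> 'x) \<Rightarrow> real" where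
  "et lam e xe = - \<eta> * Ce e xe - \<eta> * (\<Sum>i\<in>e. lam e i (xe i))"
definition VT where "VT lam i = ln (\<Sum>x\<in>X. exp (vt lam i x))"
definition ET where "ET lam e = ln (\<Sum>xe\<in>PiE e (\<lambda>_. X). exp (et lam e xe))"

lemma L_alt: "L lam = (1/\<eta>) * (\<Sum>i\<in>V. VT lam i) + (1/\<eta>) * (\<Sum>e\<in>E. ET lam e)"
  unfolding dualL_def VT_def ET_def vt_def et_def by simp

lemma Xne: "X \<noteq> {}" using d2 by auto

lemma edge_props: assumes "e \<in> E" shows "finite e" "card e = 2" "e \<subseteq> V"
  using edges assms by auto

lemma finE: "finite E"
proof -
  have "E \<subseteq> Pow V" using edges by auto
  thus ?thesis using finV finite_subset by blast
qed

lemma PiE_fin: "finite (PiE e (\<lambda>_. X))" if "e \<in> E"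
  using that edge_props finX by (simp add: finite_PiE)

lemma PiE_ne: "PiE e (\<lambda>_. X) \<noteq> {}" using Xne by (simp add: PiE_eq_empty_iff)

lemma PiE_card: "card (PiE e (\<lambda>_. X)) = card X ^ 2" if "e \<in> E"
  using that edge_props by (simp add: card_PiE)

lemma C_bounds:
  shows "C \<ge> 0"
    and "\<And>i x. i \<in> V \<Longrightarrow> x \<in> X \<Longrightarrow> \<bar>Cv i x\<bar> \<le> C"
    and "\<And>e xe. e \<in> E \<Longrightarrow> xe \<in> PiE e (\<lambda>_. X) \<Longrightarrow> \<bar>Ce e xe\<bar> \<le> C"
proof -
  have f1: "finite {\<bar>Cv i x\<bar> | i x. i \<in> V \<and> x \<in> X}"
  proof -
    have "{\<bar>Cv i x\<bar> | i x. i \<in> V \<and> x \<in> X} = (\<lambda>(i,x). \<bar>Cv i x\<bar>) ` (V \<times> X)" by auto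
    thus ?thesis using finV finX by simp
  qed
  have f2: "finite {\<bar>Ce e xe\<bar> | e xe. e \<in> E \<and> xe \<in> PiE e (\<lambda>_. X)}"
  proof -
    have "{\<bar>Ce e xe\<bar> | e xe. e \<in> E \<and> xe \<in> PiE e (\<lambda>_. X)} = (\<lambda>(e,xe). \<bar>Ce e xe\<bar>) ` (SIGMA e:E. PiE e (\<lambda>_. X))" by auto
    moreover have "finite (SIGMA e:E. PiE e (\<lambda>_. X))" using finE PiE_fin by auto
    ultimately show ?thesis by simp
  qed
  let ?S = "insert 0 ({\<bar>Cv i x\<bar> | i x. i \<in> V \<and> x \<in> X} \<union> {\<bar>Ce e xe\<bar> | e xe. e \<in> E \<and> xe \<in> PiE e (\<lambda>_. X)})"
  have fS: "finite ?S" using f1 f2 by simp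
  show "C \<ge> 0" unfolding cost_sup_def using fS by (intro Max_ge) auto
  show "\<And>i x. i \<in> V \<Longrightarrow> x \<in> X \<Longrightarrow> \<bar>Cv i x\<bar> \<le> C" unfolding cost_sup_def using fS by (intro Max_ge) auto
  show "\<And>e xe. e \<in> E \<Longrightarrow> xe \<in> PiE e (\<lambda>_. X) \<Longrightarrow> \<bar>Ce e xe\<bar> \<le> C" unfolding cost_sup_def using fS by (intro Max_ge) auto
qed

lemma double_count: "(\<Sum>i\<in>V. \<Sum>e\<in>nbhd E i. f e i) = (\<Sum>e\<in>E. \<Sum>i\<in>e. f e i)"
proof -
  have "(\<Sum>i\<in>V. \<Sum>e\<in>nbhd E i. f e i) = (\<Sum>i\<in>V. \<Sum>e\<in>{e. e \<in> E \<and> i \<in> e}. f e i)"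
    by (simp add: nbhd_def)
  also have "\<dots> = (\<Sum>e\<in>E. \<Sum>i\<in>{i. i \<in> V \<and> i \<in> e}. f e i)"
    by (rule sum.swap_restrict[OF finV finE])
  also have "\<dots> = (\<Sum>e\<in>E. \<Sum>i\<in>e. f e i)"
    by (rule sum.cong[OF refl], rule sum.cong) (use edge_props in auto)
  finally show ?thesis .
qed

lemma L_cong: assumes "\<And>e i x. e \<in> E \<Longrightarrow> i \<in> e \<Longrightarrow> x \<in> X \<Longrightarrow> lam1 e i x = lam2 e i x"
  shows "L lam1 = L lam2"
  unfolding dualL_def
  apply (intro arg_cong2[where f="(+)"] arg_cong2[where f="(*)"] refl sum.cong arg_cong[where f=ln] arg_cong[where f=exp]
      arg_cong2[where f="(-)"])
  using assms by (auto simp: nbhd_def PiE_iff)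

lemma VT_pos: "(\<Sum>x\<in>X. exp (f x)) > (0::real)"
  using finX Xne by (intro sum_pos) auto

lemma ET_pos: "e \<in> E \<Longrightarrow> (\<Sum>xe\<in>PiE e (\<lambda>_. X). exp (f xe)) > (0::real)"
  using PiE_fin PiE_ne by (intro sum_pos) auto

lemma ln_sum_shift: assumes "finite A" "A \<noteq> {}"
  shows "ln (\<Sum>x\<in>A. exp (f x + k)) = ln (\<Sum>x\<in>A. exp (f x)) + (k::real)"
proof -
  have "(\<Sum>x\<in>A. exp (f x + k)) = exp k * (\<Sum>x\<in>A. exp (f x))"
    by (simp add: exp_add sum_distrib_left mult.commute)
  moreover have "(\<Sum>x\<in>A. exp (f x)) > 0" using assms by (intro sum_pos) auto
  ultimately show ?thesis by (simp add: ln_mult)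
qed

lemma gauge: "L (\<lambda>e i x. lam e i x - c e i) = L lam"
proof -
  let ?l = "\<lambda>e i x. lam e i x - c e i"
  have v: "VT ?l i = VT lam i + (- \<eta> * (\<Sum>e\<in>nbhd E i. c e i))" for i
  proof -
    have *: "vt ?l i x = vt lam i x + (- \<eta> * (\<Sum>e\<in>nbhd E i. c e i))" for x
      unfolding vt_def by (simp add: sum_subtractf algebra_simps)
    show ?thesis unfolding VT_def by (simp only: *) (rule ln_sum_shift[OF finX Xne])
  qed
  have ee: "ET ?l e = ET lam e + \<eta> * (\<Sum>i\<in>e. c e i)" if "e \<in> E" for e
  proof -
    have "et ?l e xe = et lam e xe + \<eta> * (\<Sum>i\<in>e. c e i)" for xe
      unfolding et_def by (simp add: sum_subtractf algebra_simps)
    thus ?thesis unfolding ET_def using ln_sum_shift[OF PiE_fin[OF that] PiE_ne] by simp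
  qed
  have "L ?l = (1/\<eta>) * (\<Sum>i\<in>V. VT lam i) + (1/\<eta>) * (- \<eta> * (\<Sum>i\<in>V. \<Sum>e\<in>nbhd E i. c e i))
     + ((1/\<eta>) * (\<Sum>e\<in>E. ET lam e) + (1/\<eta>) * (\<eta> * (\<Sum>e\<in>E. \<Sum>i\<in>e. c e i)))"
    unfolding L_alt using ee by (simp add: sum.distrib sum_distrib_left v algebra_simps)
  also have "\<dots> = L lam" unfolding L_alt double_count using eta by (simp add: algebra_simps)
  finally show ?thesis .
qed

lemma ln_sum_ge: assumes "finite A" "a \<in> A" shows "ln (\<Sum>x\<in>A. exp (f x)) \<ge> (f a::real)"
proof -
  have le: "exp (f a) \<le> (\<Sum>x\<in>A. exp (f x))" using assms by (intro member_le_sum) auto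
  moreover have "0 < (\<Sum>x\<in>A. exp (f x))" using le exp_gt_zero[of "f a"] by linarith
  ultimately have "ln (exp (f a)) \<le> ln (\<Sum>x\<in>A. exp (f x))" by (subst ln_le_cancel_iff) auto
  thus ?thesis by simp
qed

lemma ln_sum_le: assumes "finite A" "A \<noteq> {}" "\<And>x. x \<in> A \<Longrightarrow> f x \<le> k"
  shows "ln (\<Sum>x\<in>A. exp (f x)) \<le> ln (real (card A)) + (k::real)"
proof -
  have cA: "card A > 0" using assms card_gt_0_iff by blast
  have "(\<Sum>x\<in>A. exp (f x)) \<le> (\<Sum>x\<in>A. exp k)" using assms by (intro sum_mono) auto
  also have "\<dots> = real (card A) * exp k" by simp
  finally have "ln (\<Sum>x\<in>A. exp (f x)) \<le> ln (real (card A) * exp k)"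
    using assms cA by (subst ln_le_cancel_iff) (auto intro!: sum_pos)
  also have "\<dots> = ln (real (card A)) + k" using assms by (simp add: ln_mult card_gt_0_iff)
  finally show ?thesis .
qed

lemma eta_mul: "a \<le> b \<Longrightarrow> \<eta> * a \<le> \<eta> * b" using eta by simp

lemma L0_upper: "L (\<lambda>_ _ _. 0) \<le> (real (card V) + real (card E)) * C
     + (real (card V) + 2 * real (card E)) * ln (real (card X)) / \<eta>"
proof -
  have v: "VT (\<lambda>_ _ _. 0) i \<le> ln (real (card X)) + \<eta> * C" if "i \<in> V" for i
    unfolding VT_def vt_def
    using C_bounds(2)[OF that] eta
    by (intro ln_sum_le[OF finX Xne]) (auto simp: abs_le_iff intro!: eta_mul[of "- Cv i _", simplified])
  have e: "ET (\<lambda>_ _ _. 0) e \<le> 2 * ln (real (card X)) + \<eta> * C" if "e \<in> E" for e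
  proof -
    have "ET (\<lambda>_ _ _. 0) e \<le> ln (real (card (PiE e (\<lambda>_. X)))) + \<eta> * C"
      unfolding ET_def et_def
      using C_bounds(3)[OF that] eta
      by (intro ln_sum_le[OF PiE_fin[OF that] PiE_ne]) (auto simp: abs_le_iff intro!: eta_mul[of "- Ce e _", simplified])
    also have "ln (real (card (PiE e (\<lambda>_. X)))) = 2 * ln (real (card X))"
      using PiE_card[OF that] d2 by (simp add: ln_realpow)
    finally show ?thesis .
  qed
  have "(\<Sum>i\<in>V. VT (\<lambda>_ _ _. 0) i) \<le> real (card V) * (ln (real (card X)) + \<eta> * C)"
    using sum_mono[of V _ "\<lambda>_. ln (real (card X)) + \<eta> * C", OF v] by simp
  moreover have "(\<Sum>e\<in>E. ET (\<lambda>_ _ _. 0) e) \<le> real (card E) * (2 * ln (real (card X)) + \<eta> * C)"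
    using sum_mono[of E _ "\<lambda>_. 2 * ln (real (card X)) + \<eta> * C", OF e] by simp
  ultimately have "L (\<lambda>_ _ _. 0) \<le> (1/\<eta>) * (real (card V) * (ln (real (card X)) + \<eta> * C))
     + (1/\<eta>) * (real (card E) * (2 * ln (real (card X)) + \<eta> * C))"
    unfolding L_alt using eta by (intro add_mono mult_left_mono) auto
  also have "\<dots> = (real (card V) + real (card E)) * C
     + (real (card V) + 2 * real (card E)) * ln (real (card X)) / \<eta>"
    using eta by (simp add: field_simps)
  finally show ?thesis .
qed

lemma L_lower_gen: assumes "\<And>i. i \<in> V \<Longrightarrow> VT lam i \<ge> a i" "\<And>e. e \<in> E \<Longrightarrow> ET lam e \<ge> b e"
  shows "L lam \<ge> (1/\<eta>) * (\<Sum>i\<in>V. a i) + (1/\<eta>) * (\<Sum>e\<in>E. b e)"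
  unfolding L_alt using eta assms by (intro add_mono mult_left_mono sum_mono) auto

lemma Cv_low: "i \<in> V \<Longrightarrow> x \<in> X \<Longrightarrow> - \<eta> * Cv i x \<ge> - \<eta> * C"
  using C_bounds(2)[of i x] eta_mul[of "Cv i x" C] by (auto simp: abs_le_iff)
lemma Ce_low: "e \<in> E \<Longrightarrow> xe \<in> PiE e (\<lambda>_. X) \<Longrightarrow> - \<eta> * Ce e xe \<ge> - \<eta> * C"
  using C_bounds(3)[of e xe] eta_mul[of "Ce e xe" C] by (auto simp: abs_le_iff)

lemma L_lower_ref: assumes xr: "xr \<in> X" and z: "\<And>e i. e \<in> E \<Longrightarrow> i \<in> e \<Longrightarrow> lam e i xr = 0"
  shows "L lam \<ge> - (real (card V) + real (card E)) * C"
proof -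
  have v: "VT lam i \<ge> - \<eta> * C" if "i \<in> V" for i
  proof -
    have "VT lam i \<ge> vt lam i xr" unfolding VT_def by (rule ln_sum_ge[OF finX xr])
    moreover have "vt lam i xr = - \<eta> * Cv i xr" unfolding vt_def using z by (simp add: nbhd_def)
    ultimately show ?thesis using Cv_low[OF that xr] by linarith
  qed
  have e: "ET lam e \<ge> - \<eta> * C" if "e \<in> E" for e
  proof -
    let ?xe = "restrict (\<lambda>_. xr) e"
    have m: "?xe \<in> PiE e (\<lambda>_. X)" using xr by auto
    have "ET lam e \<ge> et lam e ?xe" unfolding ET_def by (rule ln_sum_ge[OF PiE_fin[OF that] m])
    moreover have "et lam e ?xe = - \<eta> * Ce e ?xe" unfolding et_def using z that by simp
    ultimately show ?thesis using Ce_low[OF that m] by linarith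
  qed
  have "L lam \<ge> (1/\<eta>) * (\<Sum>i\<in>V. - \<eta> * C) + (1/\<eta>) * (\<Sum>e\<in>E. - \<eta> * C)"
    by (rule L_lower_gen) (use v e in auto)
  also have "(1/\<eta>) * (\<Sum>i\<in>V. - \<eta> * C) + (1/\<eta>) * (\<Sum>e\<in>E. - \<eta> * C) = - (real (card V) + real (card E)) * C"
    using eta by (simp add: field_simps)
  finally show ?thesis .
qed

lemma L_lower_crude:
  assumes nn: "\<And>e i x. e \<in> E \<Longrightarrow> i \<in> e \<Longrightarrow> x \<in> X \<Longrightarrow> lam e i x \<ge> 0"
    and z: "\<And>e i. e \<in> E \<Longrightarrow> i \<in> e \<Longrightarrow> \<exists>x\<in>X. lam e i x = 0"
    and e0: "e0 \<in> E" and i0: "i0 \<in> e0" and x0: "x0 \<in> X"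
  shows "lam e0 i0 x0 \<le> L lam + (real (card V) + real (card E)) * C"
proof -
  obtain xa where xa: "xa \<in> X" using Xne by auto
  have i0V: "i0 \<in> V" using edge_props(3)[OF e0] i0 by auto
  have v: "VT lam i \<ge> - \<eta> * C + (if i = i0 then \<eta> * lam e0 i0 x0 else 0)" if "i \<in> V" for i
  proof (cases "i = i0")
    case True
    have "VT lam i \<ge> vt lam i x0" unfolding VT_def by (rule ln_sum_ge[OF finX x0])
    moreover have "(\<Sum>e\<in>nbhd E i. lam e i x0) \<ge> lam e0 i x0"
      using nn True e0 i0 x0 finE by (intro member_le_sum) (auto simp: nbhd_def)
    ultimately show ?thesis using Cv_low[OF that x0] True eta_mul unfolding vt_def by fastforce
  next
    case False
    have "VT lam i \<ge> vt lam i xa" unfolding VT_def by (rule ln_sum_ge[OF finX xa])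
    moreover have "(\<Sum>e\<in>nbhd E i. lam e i xa) \<ge> 0"
      using nn xa by (intro sum_nonneg) (auto simp: nbhd_def)
    ultimately show ?thesis using Cv_low[OF that xa] False eta unfolding vt_def
      by (smt (verit) mult_nonneg_nonneg)
  qed
  have e: "ET lam e \<ge> - \<eta> * C" if "e \<in> E" for e
  proof -
    let ?xe = "restrict (\<lambda>k. SOME x. x \<in> X \<and> lam e k x = 0) e"
    have s: "(SOME x. x \<in> X \<and> lam e k x = 0) \<in> X \<and> lam e k (SOME x. x \<in> X \<and> lam e k x = 0) = 0"
      if "k \<in> e" for k
      using z[OF \<open>e \<in> E\<close> that] by (metis (mono_tags, lifting) someI_ex)
    have m: "?xe \<in> PiE e (\<lambda>_. X)" using s by auto
    have "ET lam e \<ge> et lam e ?xe" unfolding ET_def by (rule ln_sum_ge[OF PiE_fin[OF that] m])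
    moreover have "et lam e ?xe = - \<eta> * Ce e ?xe" unfolding et_def using s by simp
    ultimately show ?thesis using Ce_low[OF that m] by linarith
  qed
  have "L lam \<ge> (1/\<eta>) * (\<Sum>i\<in>V. - \<eta> * C + (if i = i0 then \<eta> * lam e0 i0 x0 else 0)) + (1/\<eta>) * (\<Sum>e\<in>E. - \<eta> * C)"
    by (rule L_lower_gen) (use v e in auto)
  also have "(\<Sum>i\<in>V. - \<eta> * C + (if i = i0 then \<eta> * lam e0 i0 x0 else 0)) = real (card V) * (- \<eta> * C) + \<eta> * lam e0 i0 x0"
    using i0V finV by (simp add: sum.distrib sum_subtractf sum.delta sum.delta')
  also have "(1/\<eta>) * (real (card V) * (- \<eta> * C) + \<eta> * lam e0 i0 x0) + (1/\<eta>) * (\<Sum>e\<in>E. - \<eta> * C)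
      = lam e0 i0 x0 - (real (card V) + real (card E)) * C"
    using eta by (simp add: field_simps)
  finally show ?thesis by linarith
qed

lemma coord_cont [continuous_intros]: "continuous_on S (\<lambda>g::'k \<Rightarrow> real. g k)"
  by (rule continuous_on_subset[OF continuous_on_product_coordinates]) auto

lemma L_cont: "continuous_on UNIV (\<lambda>g. L (\<lambda>e i x. g (e, i, x)))"
  unfolding dualL_def
  apply (intro continuous_intros)
  apply (auto simp del: )
  subgoal for i g using VT_pos[of "\<lambda>xa. \<eta> * (\<Sum>e\<in>nbhd E i. g (e, i, xa)) - \<eta> * Cv i xa"] by simp
  subgoal for e g using ET_pos[of e "\<lambda>xe. - (\<eta> * Ce e xe) - \<eta> * (\<Sum>i\<in>e. g (e, i, xe i))"] by simp
  done

lemma K_compact: "compact (PiE UNIV (S :: 'k \<Rightarrow> real set))" if "\<And>k. compact (S k)"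
proof -
  have "compactin (product_topology (\<lambda>i. euclidean) UNIV) (PiE UNIV S)"
    using that by (subst compactin_PiE) auto
  thus ?thesis by (simp add: euclidean_product_topology)
qed

lemma exists_min: "\<exists>lam0. \<forall>lam. L lam0 \<le> L lam"
proof -
  define D where "D = {(e, i, x). e \<in> E \<and> i \<in> e \<and> x \<in> X}"
  define B where "B = \<bar>L (\<lambda>_ _ _. 0)\<bar> + (real (card V) + real (card E)) * C"
  define S where "S = (\<lambda>k. if k \<in> D then {0..B} else {0::real})"
  define K where "K = PiE UNIV S"
  have cK: "compact K" unfolding K_def S_def by (rule K_compact) auto
  have B0: "B \<ge> 0" unfolding B_def using C_bounds(1) by simp
  have zK: "(\<lambda>_. 0) \<in> K" unfolding K_def S_def using B0 by auto
  obtain g0 where g0: "g0 \<in> K" and min: "\<And>g. g \<in> K \<Longrightarrow> L (\<lambda>e i x. g0 (e, i, x)) \<le> L (\<lambda>e i x. g (e, i, x))"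
    using continuous_attains_inf[OF cK _ continuous_on_subset[OF L_cont]] zK by blast
  have "L (\<lambda>e i x. g0 (e, i, x)) \<le> L lam" for lam
  proof (cases "L lam \<ge> L (\<lambda>_ _ _. 0)")
    case True
    then show ?thesis using min[OF zK] by simp
  next
    case False
    define c where "c = (\<lambda>e i. Min (lam e i ` X))"
    define lam' where "lam' = (\<lambda>e i x. if (e, i, x) \<in> D then lam e i x - c e i else 0)"
    have eq: "L lam' = L lam"
    proof -
      have "L lam' = L (\<lambda>e i x. lam e i x - c e i)" by (rule L_cong) (simp add: lam'_def D_def)
      also have "\<dots> = L lam" by (rule gauge)
      finally show ?thesis .
    qed
    have nn: "lam' e i x \<ge> 0" if "e \<in> E" "i \<in> e" "x \<in> X" for e i x
      using that finX unfolding lam'_def c_def D_def by auto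
    have z: "\<exists>x\<in>X. lam' e i x = 0" if "e \<in> E" "i \<in> e" for e i
    proof -
      have "c e i \<in> lam e i ` X" unfolding c_def using finX Xne by (intro Min_in) auto
      then obtain x where "x \<in> X" "lam e i x = c e i" by auto
      thus ?thesis using that unfolding lam'_def D_def by auto
    qed
    define g where "g = (\<lambda>(e, i, x). lam' e i x)"
    have "g \<in> K"
    proof -
      have "g k \<in> S k" for k
      proof (cases "k \<in> D")
        case True
        then obtain e i x where k: "k = (e, i, x)" "e \<in> E" "i \<in> e" "x \<in> X" unfolding D_def by auto
        have "lam' e i x \<le> L lam' + (real (card V) + real (card E)) * C"
          by (rule L_lower_crude) (use nn z k in auto)
        moreover have "L lam' \<le> \<bar>L (\<lambda>_ _ _. 0)\<bar>" using False eq by linarith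
        ultimately show ?thesis using nn[OF k(2-4)] True k unfolding g_def S_def B_def by auto
      next
        case False
        then show ?thesis unfolding g_def S_def lam'_def by (cases k) auto
      qed
      thus ?thesis unfolding K_def by auto
    qed
    hence "L (\<lambda>e i x. g0 (e, i, x)) \<le> L lam'" using min unfolding g_def by fastforce
    thus ?thesis using eq by simp
  qed
  thus ?thesis by blast
qed

lemma foc:
  assumes minl: "\<And>lam'. L lam \<le> L lam'" and e0: "e0 \<in> E" and i0: "i0 \<in> e0" and x0: "x0 \<in> X"
  shows "exp (vt lam i0 x0) * (\<Sum>xe\<in>PiE e0 (\<lambda>_. X). exp (et lam e0 xe))
       = (\<Sum>xe\<in>{xe\<in>PiE e0 (\<lambda>_. X). xe i0 = x0}. exp (et lam e0 xe)) * (\<Sum>x\<in>X. exp (vt lam i0 x))"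
proof -
  have i0V: "i0 \<in> V" using edge_props(3)[OF e0] i0 by auto
  have finN: "finite (nbhd E i)" for i using finE by (simp add: nbhd_def)
  let ?A = "\<Sum>x\<in>X. exp (vt lam i0 x)"
  let ?a = "exp (vt lam i0 x0)"
  let ?B = "\<Sum>xe\<in>PiE e0 (\<lambda>_. X). exp (et lam e0 xe)"
  let ?W = "\<Sum>xe\<in>{xe\<in>PiE e0 (\<lambda>_. X). xe i0 = x0}. exp (et lam e0 xe)"
  have Apos: "?A > 0" by (rule VT_pos)
  have Bpos: "?B > 0" by (rule ET_pos[OF e0])
  have aA: "?a \<le> ?A" using finX x0 by (intro member_le_sum) auto
  have sl: "{xe\<in>PiE e0 (\<lambda>_. X). xe i0 = x0} \<noteq> {}"
  proof -
    obtain xa where "xa \<in> X" using Xne by auto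
    hence "(\<lambda>k\<in>e0. if k = i0 then x0 else xa) \<in> {xe\<in>PiE e0 (\<lambda>_. X). xe i0 = x0}" using x0 i0 by auto
    thus ?thesis by blast
  qed
  have finsl: "finite {xe\<in>PiE e0 (\<lambda>_. X). xe i0 = x0}" using PiE_fin[OF e0] by simp
  have Wpos: "?W > 0" using finsl sl by (intro sum_pos) auto
  have WB: "?W \<le> ?B" using PiE_fin[OF e0] by (intro sum_mono2) auto
  have H: "(?A + (s - 1) * ?a) * (?B + (1/s - 1) * ?W) \<ge> ?A * ?B" if s0: "s > 0" for s
  proof -
    define t where "t = ln s / \<eta>"
    have st: "exp (\<eta> * t) = s" "exp (- (\<eta> * t)) = 1 / s" using s0 eta unfolding t_def by (auto simp: exp_minus inverse_eq_divide)
    define lt where "lt = (\<lambda>e i x. lam e i x + (if e = e0 \<and> i = i0 \<and> x = x0 then t else 0))"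
    have vt_lt: "vt lt i x = vt lam i x + (if i = i0 \<and> x = x0 then \<eta> * t else 0)" for i x
    proof -
      have "(\<Sum>e\<in>nbhd E i. lt e i x) = (\<Sum>e\<in>nbhd E i. lam e i x) + (\<Sum>e\<in>nbhd E i. if e = e0 \<and> i = i0 \<and> x = x0 then t else 0)"
        unfolding lt_def by (simp add: sum.distrib)
      also have "(\<Sum>e\<in>nbhd E i. if e = e0 \<and> i = i0 \<and> x = x0 then t else 0) = (if i = i0 \<and> x = x0 then t else 0)"
        using finN[of i] e0 i0 by (auto simp: nbhd_def)
      finally show ?thesis unfolding vt_def by (simp add: algebra_simps)
    qed
    have et_lt: "et lt e xe = et lam e xe + (if e = e0 \<and> xe i0 = x0 then - (\<eta> * t) else 0)" if "e \<in> E" for e xe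
    proof -
      have "(\<Sum>i\<in>e. lt e i (xe i)) = (\<Sum>i\<in>e. lam e i (xe i)) + (\<Sum>i\<in>e. if e = e0 \<and> i = i0 \<and> xe i = x0 then t else 0)"
        unfolding lt_def by (simp add: sum.distrib)
      also have "(\<Sum>i\<in>e. if e = e0 \<and> i = i0 \<and> xe i = x0 then t else 0) = (if e = e0 \<and> xe i0 = x0 then t else 0)"
      proof (cases "e = e0")
        case True
        have "(\<Sum>i\<in>e. if e = e0 \<and> i = i0 \<and> xe i = x0 then t else 0) = (\<Sum>i\<in>e0. if i = i0 then (if xe i0 = x0 then t else 0) else 0)"
          by (rule sum.cong) (auto simp: True)
        also have "\<dots> = (if xe i0 = x0 then t else 0)" using edge_props(1)[OF e0] i0 by simp
        finally show ?thesis using True by simp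
      qed simp
      finally show ?thesis unfolding et_def by (simp add: algebra_simps)
    qed
    have VTo: "VT lt i = VT lam i" if "i \<noteq> i0" for i unfolding VT_def using vt_lt that by simp
    have ETo: "ET lt e = ET lam e" if "e \<in> E" "e \<noteq> e0" for e unfolding ET_def using et_lt that by simp
    have VT0: "VT lt i0 = ln (?A + (s - 1) * ?a)"
    proof -
      have "VT lt i0 = ln (\<Sum>x\<in>X. exp (vt lam i0 x + (if x = x0 then \<eta> * t else 0)))" unfolding VT_def vt_lt by simp
      also have "\<dots> = ln (?A + (s - 1) * ?a)"
      proof -
        have "{x. x = x0 \<and> x \<in> X} = {x0}" using x0 by auto
        thus ?thesis by (simp add: sum_exp_bump[OF finX] st)
      qed
      finally show ?thesis .
    qed
    have ET0: "ET lt e0 = ln (?B + (1/s - 1) * ?W)"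
    proof -
      have "ET lt e0 = ln (\<Sum>xe\<in>PiE e0 (\<lambda>_. X). exp (et lam e0 xe + (if xe i0 = x0 then - (\<eta> * t) else 0)))"
        unfolding ET_def et_lt[OF e0] by simp
      also have "\<dots> = ln (?B + (1/s - 1) * ?W)" by (simp add: sum_exp_bump[OF PiE_fin[OF e0]] st)
      finally show ?thesis .
    qed
    have sV: "(\<Sum>i\<in>V. VT lt i) = (\<Sum>i\<in>V. VT lam i) - VT lam i0 + VT lt i0"
      using sum.remove[OF finV i0V, of "VT lt"] sum.remove[OF finV i0V, of "VT lam"] VTo
      by (simp add: sum.cong[of "V - {i0}" "V - {i0}" "VT lt" "VT lam"])
    have sE: "(\<Sum>e\<in>E. ET lt e) = (\<Sum>e\<in>E. ET lam e) - ET lam e0 + ET lt e0"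
      using sum.remove[OF finE e0, of "ET lt"] sum.remove[OF finE e0, of "ET lam"] ETo
      by (simp add: sum.cong[of "E - {e0}" "E - {e0}" "ET lt" "ET lam"])
    have "L lam \<le> L lt" by (rule minl)
    hence "(1/\<eta>) * (\<Sum>i\<in>V. VT lam i) + (1/\<eta>) * (\<Sum>e\<in>E. ET lam e) \<le>
           (1/\<eta>) * ((\<Sum>i\<in>V. VT lam i) - VT lam i0 + VT lt i0) + (1/\<eta>) * ((\<Sum>e\<in>E. ET lam e) - ET lam e0 + ET lt e0)"
      unfolding L_alt sV sE .
    hence "(1/\<eta>) * (VT lam i0 + ET lam e0) \<le> (1/\<eta>) * (VT lt i0 + ET lt e0)" by (simp add: algebra_simps)
    hence "VT lam i0 + ET lam e0 \<le> VT lt i0 + ET lt e0" using eta by (simp add: divide_le_cancel)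
    hence "VT lam i0 + ET lam e0 \<le> ln (?A + (s - 1) * ?a) + ln (?B + (1/s - 1) * ?W)"
      using VT0 ET0 by simp
    hence "ln ?A + ln ?B \<le> ln (?A + (s - 1) * ?a) + ln (?B + (1/s - 1) * ?W)"
      unfolding VT_def ET_def by simp
    moreover have p1: "?A + (s - 1) * ?a > 0"
    proof -
      have "?A + (s - 1) * ?a = (?A - ?a) + s * ?a" by (simp add: algebra_simps)
      thus ?thesis using aA s0 by (smt (verit) exp_gt_zero mult_pos_pos)
    qed
    moreover have p2: "?B + (1/s - 1) * ?W > 0"
    proof -
      have "?B + (1/s - 1) * ?W = (?B - ?W) + (1/s) * ?W" by (simp add: algebra_simps)
      thus ?thesis using WB Wpos s0 by (smt (verit) divide_pos_pos mult_pos_pos)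
    qed
    ultimately have "ln (?A * ?B) \<le> ln ((?A + (s - 1) * ?a) * (?B + (1/s - 1) * ?W))"
      using Apos Bpos by (simp add: ln_mult)
    thus ?thesis using Apos Bpos p1 p2 by simp
  qed
  have "?a * ?B = ?W * ?A" by (rule foc_real[OF exp_gt_zero aA Wpos WB H])
  thus ?thesis .
qed

definition gD where "gD lam e i xe = - \<eta> * Ce e xe - \<eta> * (\<Sum>k\<in>e - {i}. lam e k (xe k))"
definition DD where "DD lam e i x = (\<Sum>xe\<in>{xe\<in>PiE e (\<lambda>_. X). xe i = x}. exp (gD lam e i xe))"

lemma slice_ne: assumes "i \<in> e" "x \<in> X" shows "{xe\<in>PiE e (\<lambda>_. X). xe i = x} \<noteq> {}"
proof -
  obtain xa where "xa \<in> X" using Xne by auto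
  hence "(\<lambda>k\<in>e. if k = i then x else xa) \<in> {xe\<in>PiE e (\<lambda>_. X). xe i = x}" using assms by auto
  thus ?thesis by blast
qed

lemma DD_pos: assumes "e \<in> E" "i \<in> e" "x \<in> X" shows "DD lam e i x > 0"
  unfolding DD_def using slice_ne[OF assms(2,3)] PiE_fin[OF assms(1)] by (intro sum_pos) auto

lemma W_eq: assumes "e \<in> E" "i \<in> e"
  shows "(\<Sum>xe\<in>{xe\<in>PiE e (\<lambda>_. X). xe i = x}. exp (et lam e xe)) = exp (- \<eta> * lam e i x) * DD lam e i x"
  unfolding DD_def sum_distrib_left
proof (rule sum.cong[OF refl])
  fix xe assume "xe \<in> {xe\<in>PiE e (\<lambda>_. X). xe i = x}"
  hence xi: "xe i = x" by auto
  have "(\<Sum>k\<in>e. lam e k (xe k)) = lam e i (xe i) + (\<Sum>k\<in>e - {i}. lam e k (xe k))"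
    using sum.remove[OF edge_props(1)[OF assms(1)] assms(2)] by simp
  thus "exp (et lam e xe) = exp (- \<eta> * lam e i x) * exp (gD lam e i xe)"
    unfolding et_def gD_def by (simp add: xi exp_add[symmetric] algebra_simps)
qed

lemma DD_ratio: assumes e: "e \<in> E" and i: "i \<in> e" and x: "x \<in> X" and x': "x' \<in> X"
  shows "ln (DD lam e i x) - ln (DD lam e i x') \<le> 2 * \<eta> * C"
proof -
  let ?S = "\<lambda>x. {xe\<in>PiE e (\<lambda>_. X). xe i = x}"
  have bij: "bij_betw (\<lambda>xe. xe(i := x)) (?S x') (?S x)"
    by (rule bij_betw_byWitness[where f'="\<lambda>xe. xe(i := x')"]) (use i x x' in \<open>auto simp: PiE_iff extensional_def\<close>)
  have "DD lam e i x = (\<Sum>xe\<in>?S x'. exp (gD lam e i (xe(i := x))))"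
    unfolding DD_def using sum.reindex_bij_betw[OF bij, of "\<lambda>xe. exp (gD lam e i xe)"] by simp
  also have "\<dots> \<le> (\<Sum>xe\<in>?S x'. exp (2 * \<eta> * C) * exp (gD lam e i xe))"
  proof (intro sum_mono)
    fix xe assume xe: "xe \<in> ?S x'"
    have m1: "xe \<in> PiE e (\<lambda>_. X)" using xe by auto
    have m2: "xe(i := x) \<in> PiE e (\<lambda>_. X)" using xe i x by (auto simp: PiE_iff extensional_def)
    have s: "(\<Sum>k\<in>e - {i}. lam e k ((xe(i := x)) k)) = (\<Sum>k\<in>e - {i}. lam e k (xe k))"
      by (rule sum.cong) auto
    have "- \<eta> * Ce e (xe(i := x)) \<le> 2 * \<eta> * C + - \<eta> * Ce e xe"
      using C_bounds(3)[OF e m1] C_bounds(3)[OF e m2] eta_mul[of "Ce e xe" C] eta_mul[of "- Ce e (xe(i := x))" C]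
      by (auto simp: abs_le_iff algebra_simps)
    hence "gD lam e i (xe(i := x)) \<le> 2 * \<eta> * C + gD lam e i xe" unfolding gD_def s by linarith
    thus "exp (gD lam e i (xe(i := x))) \<le> exp (2 * \<eta> * C) * exp (gD lam e i xe)"
      by (simp add: exp_add[symmetric])
  qed
  also have "\<dots> = exp (2 * \<eta> * C) * DD lam e i x'" unfolding DD_def by (simp add: sum_distrib_left)
  finally have "ln (DD lam e i x) \<le> ln (exp (2 * \<eta> * C) * DD lam e i x')"
    using DD_pos[OF e i x] DD_pos[OF e i x'] by simp
  thus ?thesis using DD_pos[where lam=lam, OF e i x'] by (simp add: ln_mult)
qed

lemma star:
  assumes minl: "\<And>lam'. L lam \<le> L lam'" and e: "e \<in> E" and i: "i \<in> e" and x: "x \<in> X"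
  shows "vt lam i x + \<eta> * lam e i x = ln (DD lam e i x) + (ln (\<Sum>x\<in>X. exp (vt lam i x)) - ln (\<Sum>xe\<in>PiE e (\<lambda>_. X). exp (et lam e xe)))"
proof -
  let ?A = "\<Sum>x\<in>X. exp (vt lam i x)"
  let ?B = "\<Sum>xe\<in>PiE e (\<lambda>_. X). exp (et lam e xe)"
  have "exp (vt lam i x) * ?B = (exp (- \<eta> * lam e i x) * DD lam e i x) * ?A"
    using foc[OF minl e i x] W_eq[OF e i] by simp
  hence "ln (exp (vt lam i x) * ?B) = ln ((exp (- \<eta> * lam e i x) * DD lam e i x) * ?A)" by simp
  moreover have pA: "?A > 0" by (rule VT_pos)
  moreover have pB: "?B > 0" by (rule ET_pos[OF e])
  moreover have pD: "DD lam e i x > 0" by (rule DD_pos[OF e i x])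
  ultimately have "vt lam i x + ln ?B = - \<eta> * lam e i x + ln (DD lam e i x) + ln ?A"
    by (simp add: ln_mult)
  thus ?thesis by simp
qed

lemma osc:
  assumes minl: "\<And>lam'. L lam \<le> L lam'" and e: "e \<in> E" and i: "i \<in> e" and x: "x \<in> X" and x': "x' \<in> X"
  shows "lam e i x - lam e i x' \<le> 4 * C"
proof -
  have iV: "i \<in> V" using edge_props(3)[OF e] i by auto
  let ?K = "nbhd E i"
  have finK: "finite ?K" using finE by (simp add: nbhd_def)
  have eK: "e \<in> ?K" using e i by (simp add: nbhd_def)
  define v where "v = (\<lambda>f. lam f i x - lam f i x')"
  define u where "u = (\<lambda>f. ln (DD lam f i x) - ln (DD lam f i x'))"
  define a where "a = \<eta> * (Cv i x - Cv i x')"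
  have "\<eta> * v e \<le> 2 * (2 * \<eta> * C)"
  proof (rule osc_alg[OF finK eK eta])
    fix f assume f: "f \<in> ?K"
    hence fE: "f \<in> E" and fi: "i \<in> f" by (auto simp: nbhd_def)
    note s1 = star[OF minl fE fi x] and s2 = star[OF minl fE fi x']
    show "- a + \<eta> * (\<Sum>g\<in>?K. v g) + \<eta> * v f = u f"
      using s1 s2 unfolding u_def v_def a_def vt_def by (simp add: sum_subtractf algebra_simps)
    show "\<bar>u f\<bar> \<le> 2 * \<eta> * C" using DD_ratio[OF fE fi x x'] DD_ratio[OF fE fi x' x]
      unfolding u_def by (simp add: abs_le_iff)
  next
    show "\<bar>a\<bar> \<le> 2 * \<eta> * C"
      using C_bounds(2)[OF iV x] C_bounds(2)[OF iV x'] eta_mul[of "Cv i x - Cv i x'" "2 * C"]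
        eta_mul[of "Cv i x' - Cv i x" "2 * C"] unfolding a_def by (auto simp: abs_le_iff algebra_simps)
  qed
  hence "\<eta> * v e \<le> \<eta> * (4 * C)" by simp
  thus ?thesis unfolding v_def using eta by simp
qed

lemma main: "\<exists>lam_star. (\<forall>lam. L lam_star \<le> L lam) \<and>
     4 * L (\<lambda>_ _ _. 0) - 4 * L lam_star
       + 16 * (real (card E))\<^sup>2 * \<eta> * dual_norm2_sq E X lam_star
     \<le> (24 * real (card E) * real (card X) * (real (card E) + real (card V))
          * (sqrt \<eta> * C + ln (real (card X)) / sqrt \<eta>))\<^sup>2"
proof -
  obtain lam0 where m0: "\<And>lam. L lam0 \<le> L lam" using exists_min by blast
  obtain xr where xr: "xr \<in> X" using Xne by auto
  define ls where "ls = (\<lambda>e i x. lam0 e i x - lam0 e i xr)"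
  have eqL: "L ls = L lam0" unfolding ls_def by (rule gauge)
  have gmin: "\<forall>lam. L ls \<le> L lam" using m0 eqL by simp
  have bnd: "\<bar>ls e i x\<bar> \<le> 4 * C" if "e \<in> E" "i \<in> e" "x \<in> X" for e i x
    using osc[OF m0 that(1,2) that(3) xr] osc[OF m0 that(1,2) xr that(3)] unfolding ls_def by auto
  have low: "L ls \<ge> - (real (card V) + real (card E)) * C"
    by (rule L_lower_ref[OF xr]) (simp add: ls_def)
  have nrm: "dual_norm2_sq E X ls \<le> 32 * real (card E) * real (card X) * C^2"
  proof -
    have "dual_norm2_sq E X ls \<le> (\<Sum>e\<in>E. \<Sum>i\<in>e. \<Sum>x\<in>X. (4 * C)^2)"
      unfolding dual_norm2_sq_def
    proof (intro sum_mono)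
      fix e i x assume "e \<in> E" "i \<in> e" "x \<in> X"
      hence "\<bar>ls e i x\<bar> \<le> 4 * C" by (rule bnd)
      hence "\<bar>ls e i x\<bar>^2 \<le> (4 * C)^2" by (intro power_mono) auto
      thus "(ls e i x)^2 \<le> (4 * C)^2" by simp
    qed
    also have "\<dots> = (\<Sum>e\<in>E. 2 * (real (card X) * (4 * C)^2))"
      by (rule sum.cong) (use edge_props in auto)
    also have "\<dots> = 32 * real (card E) * real (card X) * C^2" by (simp add: power2_eq_square)
    finally show ?thesis .
  qed
  have ineq: "4 * L (\<lambda>_ _ _. 0) - 4 * L ls + 16 * (real (card E))\<^sup>2 * \<eta> * dual_norm2_sq E X ls
     \<le> (24 * real (card E) * real (card X) * (real (card E) + real (card V))
          * (sqrt \<eta> * C + ln (real (card X)) / sqrt \<eta>))\<^sup>2"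
  proof (cases "E = {}")
    case True
    hence "V = {}" using cover by auto
    thus ?thesis using True by (simp add: dualL_def dual_norm2_sq_def)
  next
    case False
    hence m1: "real (card E) \<ge> 1" using finE by (simp add: Suc_le_eq card_gt_0_iff)
    have ld: "ln (real (card X)) \<ge> 1/2"
    proof -
      have "ln (2::real) \<le> ln (real (card X))" using d2 by (subst ln_le_cancel_iff) auto
      thus ?thesis using ln2_half by linarith
    qed
    have P: "L (\<lambda>_ _ _. 0) - L ls \<le> 2 * (real (card V) + real (card E)) * C
        + (real (card V) + 2 * real (card E)) * ln (real (card X)) / \<eta>"
      using L0_upper low by (simp add: algebra_simps)
    have "4 * (L (\<lambda>_ _ _. 0) - L ls) + 16 * (real (card E))^2 * \<eta> * dual_norm2_sq E X ls
      \<le> (24 * real (card E) * real (card X) * (real (card E) + real (card V))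
          * (sqrt \<eta> * C + ln (real (card X)) / sqrt \<eta>))\<^sup>2"
      by (rule final_arith[OF m1 _ _ C_bounds(1) eta ld P nrm]) (use d2 in auto)
    thus ?thesis by (simp add: algebra_simps)
  qed
  show ?thesis using gmin ineq by blast
qed

end

theorem lemma7:
  fixes V :: "'v set" and E :: "'v set set" and X :: "'x set"
    and Cv :: "'v \<Rightarrow> 'x \<Rightarrow> real" and Ce :: "'v set \<Rightarrow> ('v \<Rightarrow> 'x) \<Rightarrow> real"
    and \<eta> :: real
  assumes finV: "finite V"
    and edges: "\<forall>e\<in>E. \<exists>i j. i \<in> V \<and> j \<in> V \<and> i \<noteq> j \<and> e = {i, j}"
    and cover: "\<forall>i\<in>V. \<exists>e\<in>E. i \<in> e"
    and finX: "finite X"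
    and d2: "card X \<ge> 2"
    and eta: "\<eta> > 0"
  shows "\<exists>lam_star. (\<forall>lam. dualL \<eta> V E X Cv Ce lam_star \<le> dualL \<eta> V E X Cv Ce lam) \<and>
     4 * dualL \<eta> V E X Cv Ce (\<lambda>_ _ _. 0) - 4 * dualL \<eta> V E X Cv Ce lam_star
       + 16 * (real (card E))\<^sup>2 * \<eta> * dual_norm2_sq E X lam_star
     \<le> (24 * real (card E) * real (card X) * (real (card E) + real (card V))
          * (sqrt \<eta> * cost_sup V E X Cv Ce + ln (real (card X)) / sqrt \<eta>))\<^sup>2"
  proof -
  interpret dsetup V E X Cv Ce \<eta>
    by (rule dsetup.intro) (fact finV edges cover finX d2 eta)+
  show ?thesis using main by simp
qed

end
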